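(* A finite-dimensional complex Lie algebra admits a periodic derivation if and only if it admits a periodic derivation of order six.
   Context: A derivation $D$ of a Lie algebra is called periodic if there is an integer $m\ge 1$ with $D^m=\mathrm{id}$; its order is the smallest such $m$. *)

theory Defs
  imports Main "HOL-Analysis.Analysis"
begin

definition lie_algebra ::
  "(complex \<Rightarrow> 'a::ab_group_add \<Rightarrow> 'a) \<Rightarrow> ('a \<Rightarrow> 'a \<Rightarrow> 'a) \<Rightarrow> bool" where
  "lie_algebra smul br \<longleftrightarrow>
     vector_space smul \<and>
     (\<forall>x y z. br (x + y) z = br x z + br y z) \<and>
     (\<forall>x y z. br x (y + z) = br x y + br x z) \<and>
     (\<forall>c x y. br (smul c x) y = smul c (br x y)) \<and>
     (\<forall>c x y. br x (smul c y) = smul c (br x y)) \<and>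
     (\<forall>x. br x x = 0) \<and>
     (\<forall>x y z. br x (br y z) + br y (br z x) + br z (br x y) = 0)"

definition finite_dim :: "(complex \<Rightarrow> 'a::ab_group_add \<Rightarrow> 'a) \<Rightarrow> bool" where
  "finite_dim smul \<longleftrightarrow> (\<exists>B. finite B \<and> module.span smul B = UNIV)"

definition lie_derivation ::
  "(complex \<Rightarrow> 'a::ab_group_add \<Rightarrow> 'a) \<Rightarrow> ('a \<Rightarrow> 'a \<Rightarrow> 'a) \<Rightarrow> ('a \<Rightarrow> 'a) \<Rightarrow> bool" where
  "lie_derivation smul br D \<longleftrightarrow>
     Vector_Spaces.linear smul smul D \<and>
     (\<forall>x y. D (br x y) = br (D x) y + br x (D y))"

definition periodic :: "('a \<Rightarrow> 'a) \<Rightarrow> bool" where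
  "periodic D \<longleftrightarrow> (\<exists>m::nat. m \<ge> 1 \<and> D ^^ m = id)"

definition periodic_of_order :: "('a \<Rightarrow> 'a) \<Rightarrow> nat \<Rightarrow> bool" where
  "periodic_of_order D m \<longleftrightarrow> m \<ge> 1 \<and> D ^^ m = id \<and> (\<forall>k. 1 \<le> k \<and> k < m \<longrightarrow> D ^^ k \<noteq> id)"

end

theory Submission
  imports Defs
begin


lemma funpow_add:
  fixes f :: "'a::ab_group_add \<Rightarrow> 'a"
  assumes "\<And>x y. f (x + y) = f x + f y"
  shows "(f ^^ n) (x + y) = (f ^^ n) x + (f ^^ n) (y::'a::ab_group_add)"
  using assms by (induction n arbitrary: x y) auto

lemma funpow_zero:
  fixes f :: "'a::ab_group_add \<Rightarrow> 'a"
  assumes "f 0 = (0::'a::ab_group_add)"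
  shows "(f ^^ n) 0 = 0"
  using assms by (induction n) auto

lemma add_fun_sum:
  assumes "\<And>x y. f (x + y) = f x + f y" "f 0 = (0::'a::ab_group_add)"
  shows "f (sum g A) = (\<Sum>a\<in>A. f (g a))"
  by (induct A rule: infinite_finite_induct) (simp_all add: assms)

lemma root_aux:
  fixes t :: complex
  assumes "norm t = 1" "norm (1 + t) = 1"
  shows "t^2 + t + 1 = 0"
proof -
  have a: "(Re t)^2 + (Im t)^2 = 1" using assms(1) unfolding cmod_def
    by (metis real_sqrt_eq_1_iff)
  have b: "(1 + Re t)^2 + (Im t)^2 = 1" using assms(2) unfolding cmod_def
    by (metis plus_complex.sel(1) plus_complex.sel(2) one_complex.sel(1) one_complex.sel(2)
         real_sqrt_eq_1_iff add_0)
  have r: "Re t = -1/2" using a b by (simp add: power2_eq_square algebra_simps)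
  have i: "(Im t)^2 = 3/4" using a r by (simp add: power2_eq_square)
  show ?thesis
    using r i by (simp add: complex_eq_iff power2_eq_square algebra_simps)
qed

definition q6 :: "complex \<Rightarrow> complex" where "q6 x = exp (Ln (x^6) / 6)"
definition h6 :: "complex \<Rightarrow> complex" where "h6 x = x / q6 x"

lemma q6_pow: "x \<noteq> 0 \<Longrightarrow> q6 x ^ 6 = x ^ 6"
proof -
  assume "x \<noteq> 0"
  have "q6 x ^ 6 = exp (of_nat 6 * (Ln (x^6) / 6))"
    unfolding q6_def by (rule exp_of_nat_mult[symmetric])
  also have "\<dots> = x ^ 6" using \<open>x \<noteq> 0\<close> by simp
  finally show ?thesis .
qed

lemma h6_pow: "x \<noteq> 0 \<Longrightarrow> h6 x ^ 6 = 1"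
  unfolding h6_def using q6_pow[of x] by (simp add: power_divide)

lemma h6_nz: "x \<noteq> 0 \<Longrightarrow> h6 x \<noteq> 0"
  unfolding h6_def q6_def by simp

lemma h6_mult: "u ^ 6 = 1 \<Longrightarrow> h6 (u * x) = u * h6 x"
  unfolding h6_def q6_def by (simp add: power_mult_distrib)

lemma h6_add:
  fixes l k :: complex
  assumes "norm l = 1" "norm k = 1" "norm (l + k) = 1"
  shows "h6 (l + k) = h6 l + h6 k"
proof -
  have l0: "l \<noteq> 0" using assms(1) by auto
  define t where "t = k / l"
  have k: "k = t * l" using l0 by (simp add: t_def)
  have lk: "l + k = (1 + t) * l" using k by (simp add: algebra_simps)
  have nt: "norm t = 1" using assms by (simp add: t_def norm_divide)
  have n1t: "norm (1 + t) = 1"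
    using assms(1,3) lk by (simp add: norm_mult)
  have e: "t^2 + t + 1 = 0" by (rule root_aux[OF nt n1t])
  have t3: "t^3 = 1"
  proof -
    have "t^3 - 1 = (t - 1) * (t^2 + t + 1)" by (simp add: algebra_simps power2_eq_square power3_eq_cube)
    thus ?thesis using e by simp
  qed
  have "t^6 = (t^3)^2" by (simp add: power_mult[symmetric])
  hence t6: "t^6 = 1" using t3 by simp
  have "1 + t = - (t^2)" using e by (simp add: algebra_simps eq_neg_iff_add_eq_0)
  hence "(1 + t)^6 = (t^6)^2" by (simp add: power_mult[symmetric])
  hence t6': "(1 + t)^6 = 1" using t6 by simp
  show ?thesis using h6_mult[OF t6, of l] h6_mult[OF t6', of l] k lk
    by (simp add: algebra_simps)
qed



locale perd =
  fixes smul :: "complex \<Rightarrow> 'a::ab_group_add \<Rightarrow> 'a"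
    and br :: "'a \<Rightarrow> 'a \<Rightarrow> 'a"
    and D :: "'a \<Rightarrow> 'a" and m :: nat
  assumes lie: "lie_algebra smul br"
    and der: "lie_derivation smul br D"
    and m1: "m \<ge> 1" and Dm: "D ^^ m = id"
begin

sublocale vs: vector_space smul
  using lie unfolding lie_algebra_def by auto

lemma br_addl: "br (x + y) z = br x z + br y z"
  and br_addr: "br x (y + z) = br x y + br x z"
  and br_smull: "br (smul c x) y = smul c (br x y)"
  and br_smulr: "br x (smul c y) = smul c (br x y)"
  using lie unfolding lie_algebra_def by auto

lemma br_0l: "br 0 y = 0"
  using br_addl[of 0 0 y] by simp
lemma br_0r: "br x 0 = 0"
  using br_addr[of x 0 0] by simp

lemma br_suml: "br (sum f A) y = (\<Sum>a\<in>A. br (f a) y)"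
  using add_fun_sum[of "\<lambda>x. br x y"] br_addl br_0l by auto
lemma br_sumr: "br x (sum f A) = (\<Sum>a\<in>A. br x (f a))"
  using add_fun_sum[of "\<lambda>y. br x y"] br_addr br_0r by auto

lemma D_hom: "module_hom smul smul D"
  using der unfolding lie_derivation_def by (simp add: module_hom_iff_linear)

lemma D_add: "D (x + y) = D x + D y"
  using module_hom.add[OF D_hom] .
lemma D_smul: "D (smul c x) = smul c (D x)"
  using module_hom.scale[OF D_hom] .
lemma D_0: "D 0 = 0"
  using D_add[of 0 0] by simp
lemma D_br: "D (br x y) = br (D x) y + br x (D y)"
  using der unfolding lie_derivation_def by auto

lemma Dp_add: "(D ^^ n) (x + y) = (D ^^ n) x + (D ^^ n) y"
  by (rule funpow_add) (rule D_add)
lemma Dp_smul: "(D ^^ n) (smul c x) = smul c ((D ^^ n) x)"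
  by (induction n) (auto simp: D_smul)
lemma Dp_0: "(D ^^ n) 0 = 0"
  by (rule funpow_zero) (rule D_0)
lemma D_sum: "D (sum f A) = (\<Sum>a\<in>A. D (f a))"
  using add_fun_sum[of D] D_add D_0 by auto

lemma eig_pow: "D w = smul l w \<Longrightarrow> (D ^^ n) w = smul (l ^ n) w"
  by (induction n) (auto simp: D_smul mult.commute)

lemma eig_root: assumes "D w = smul l w" "w \<noteq> 0" shows "l ^ m = 1"
proof -
  have "w = smul (l ^ m) w" using eig_pow[OF assms(1), of m] Dm by simp
  hence "smul (l ^ m - 1) w = 0" by (simp add: vs.scale_left_diff_distrib)
  thus ?thesis using assms(2) by simp
qed

definition z :: complex where "z = exp (2 * pi * \<i> / of_nat m)"

lemma z_pow: "z ^ i = exp (of_nat i * (2 * pi * \<i> / of_nat m))"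
  unfolding z_def by (rule exp_of_nat_mult[symmetric])

lemma z_m: "z ^ m = 1"
  unfolding z_pow using m1 by (simp add: exp_eq_1)

lemma z_nz: "z \<noteq> 0" unfolding z_def by simp

lemma z_ne1: assumes "0 < i" "i < m" shows "z ^ i \<noteq> 1"
proof
  assume "z ^ i = 1"
  then obtain n :: int where n: "real i * (2 * pi / real m) = real_of_int (2 * n) * pi"
    unfolding z_pow exp_eq_1 by auto
  hence "real i = real m * of_int n" using m1 by (simp add: field_simps)
  hence "int i = int m * n" by (metis of_int_eq_iff of_int_mult of_int_of_nat_eq)
  moreover have "int i > 0" "int i < int m" using assms by auto
  ultimately show False
  proof (cases "n \<ge> 1")
    case True
    have "int m * n \<ge> int m * 1" by (rule mult_left_mono) (use True in auto)
    thus False using \<open>int i = int m * n\<close> \<open>int i < int m\<close> by linarith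
  next
    case False
    hence "n \<le> 0" by simp
    have "int m * n \<le> 0" by (rule mult_nonneg_nonpos) (use \<open>n \<le> 0\<close> in auto)
    thus False using \<open>int i = int m * n\<close> \<open>int i > 0\<close> by linarith
  qed
qed

lemma geo: fixes r :: complex assumes "r ^ m = 1" shows "(\<Sum>j<m. r ^ j) = (if r = 1 then of_nat m else 0)"
  using assms sum_gp_strict[of r m] by auto

lemma zinv_m: "inverse (z ^ j) ^ m = 1"
proof -
  have "(z ^ j) ^ m = (z ^ m) ^ j" by (simp add: power_mult[symmetric] mult.commute)
  thus ?thesis by (simp add: power_inverse z_m)
qed

lemma rootsum: assumes "i < m"
  shows "(\<Sum>j<m. inverse (z ^ j) ^ i) = (if i = 0 then of_nat m else 0)"
proof -
  have "(\<Sum>j<m. inverse (z ^ j) ^ i) = (\<Sum>j<m. inverse (z ^ i) ^ j)"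
    by (simp add: power_inverse power_mult[symmetric] mult.commute)
  also have "\<dots> = (if inverse (z ^ i) = 1 then of_nat m else 0)"
    by (rule geo) (rule zinv_m)
  also have "\<dots> = (if i = 0 then of_nat m else 0)"
    using z_ne1[of i] assms by (cases "i = 0") auto
  finally show ?thesis .
qed

definition P :: "nat \<Rightarrow> 'a \<Rightarrow> 'a" where
  "P j x = smul (1 / of_nat m) (\<Sum>i<m. smul (inverse (z ^ j) ^ i) ((D ^^ i) x))"

lemma P_add: "P j (x + y) = P j x + P j y"
  unfolding P_def by (simp add: Dp_add vs.scale_right_distrib sum.distrib)

lemma P_smul: "P j (smul c x) = smul c (P j x)"
  unfolding P_def by (simp add: Dp_smul vs.scale_sum_right mult.commute)

lemma P_0: "P j 0 = 0"
  unfolding P_def by (simp add: Dp_0)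

lemma decomp: "(\<Sum>j<m. P j x) = x"
proof -
  have "(\<Sum>j<m. P j x) = smul (1 / of_nat m) (\<Sum>j<m. \<Sum>i<m. smul (inverse (z ^ j) ^ i) ((D ^^ i) x))"
    unfolding P_def by (simp add: vs.scale_sum_right)
  also have "(\<Sum>j<m. \<Sum>i<m. smul (inverse (z ^ j) ^ i) ((D ^^ i) x))
      = (\<Sum>i<m. smul (\<Sum>j<m. inverse (z ^ j) ^ i) ((D ^^ i) x))"
    by (subst sum.swap) (simp add: vs.scale_sum_left)
  also have "\<dots> = (\<Sum>i<m. if i = 0 then smul (of_nat m) x else 0)"
    by (rule sum.cong) (auto simp: rootsum)
  also have "\<dots> = smul (of_nat m) x" using m1 by simp
  finally show ?thesis using m1 by simp
qed

lemma P_eig: "D (P j x) = smul (z ^ j) (P j x)"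
proof -
  define a where "a = inverse (z ^ j)"
  have am: "a ^ m = 1" unfolding a_def by (rule zinv_m)
  have az: "z ^ j * a = 1" unfolding a_def using z_nz by simp
  obtain n where mn: "m = Suc n" using m1 by (cases m) auto
  define f where "f i = smul (a ^ i) ((D ^^ i) x)" for i
  have "smul a (\<Sum>i<m. smul (a ^ i) ((D ^^ Suc i) x)) = (\<Sum>i<m. f (Suc i))"
    unfolding f_def by (simp add: vs.scale_sum_right mult.commute)
  also have "\<dots> = (\<Sum>i<m. f i)"
  proof -
    have "(\<Sum>i<Suc n. f i) = f 0 + (\<Sum>i<n. f (Suc i))" by (rule sum.lessThan_Suc_shift)
    moreover have "(\<Sum>i<Suc n. f (Suc i)) = (\<Sum>i<n. f (Suc i)) + f (Suc n)" by simp
    moreover have "f (Suc n) = f 0" unfolding f_def using am Dm mn by simp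
    ultimately show ?thesis using mn by (simp add: add.commute)
  qed
  finally have e: "smul a (\<Sum>i<m. smul (a ^ i) ((D ^^ Suc i) x)) = (\<Sum>i<m. f i)" .
  have "D (P j x) = smul (1 / of_nat m) (\<Sum>i<m. smul (a ^ i) ((D ^^ Suc i) x))"
    unfolding P_def a_def by (simp add: D_smul D_sum)
  also have "(\<Sum>i<m. smul (a ^ i) ((D ^^ Suc i) x)) = smul (z ^ j) (\<Sum>i<m. f i)"
    using arg_cong[OF e, of "smul (z ^ j)"] az by simp
  finally show ?thesis unfolding P_def f_def a_def by (simp add: mult.commute)
qed

lemma P_on_eig: assumes "D w = smul l w" "w \<noteq> 0"
  shows "P j w = (if l = z ^ j then w else 0)"
proof -
  have lm: "l ^ m = 1" by (rule eig_root[OF assms])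
  define r where "r = inverse (z ^ j) * l"
  have rm: "r ^ m = 1" unfolding r_def
    by (simp only: power_mult_distrib lm zinv_m) simp
  have "P j w = smul (1 / of_nat m) (\<Sum>i<m. smul (r ^ i) w)"
    unfolding P_def r_def using eig_pow[OF assms(1)] by (simp add: power_mult_distrib)
  also have "(\<Sum>i<m. smul (r ^ i) w) = smul (\<Sum>i<m. r ^ i) w"
    by (simp add: vs.scale_sum_left)
  also have "smul (1 / of_nat m) (smul (\<Sum>i<m. r ^ i) w) = smul (1 / of_nat m * (\<Sum>i<m. r ^ i)) w"
    by simp
  also have "\<dots> = (if r = 1 then w else 0)" using geo[OF rm] m1 by simp
  also have "(r = 1) = (l = z ^ j)"
  proof -
    have zj: "z ^ j \<noteq> 0" using z_nz by simp
    have "r = l / z ^ j" unfolding r_def by (simp add: divide_inverse mult.commute)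
    thus ?thesis using zj by auto
  qed
  finally show ?thesis .
qed

end


lemma cexp_root_ne1:
  assumes "0 < i" "i < M"
  shows "exp (2 * pi * \<i> / of_nat M) ^ i \<noteq> 1"
proof
  assume "exp (2 * pi * \<i> / of_nat M) ^ i = 1"
  hence "exp (of_nat i * (2 * pi * \<i> / of_nat M)) = 1" by (simp only: exp_of_nat_mult)
  then obtain n :: int where n: "real i * (2 * pi / real M) = real_of_int (2 * n) * pi"
    unfolding exp_eq_1 by auto
  hence "real i = real M * of_int n" using assms by (simp add: field_simps)
  hence "int i = int M * n" by (metis of_int_eq_iff of_int_mult of_int_of_nat_eq)
  moreover have "int i > 0" "int i < int M" using assms by auto
  ultimately show False
  proof (cases "n \<ge> 1")
    case True
    have "int M * n \<ge> int M * 1" by (rule mult_left_mono) (use True in auto)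
    thus False using \<open>int i = int M * n\<close> \<open>int i < int M\<close> by linarith
  next
    case False
    hence "n \<le> 0" by simp
    have "int M * n \<le> 0" by (rule mult_nonneg_nonpos) (use \<open>n \<le> 0\<close> in auto)
    thus False using \<open>int i = int M * n\<close> \<open>int i > 0\<close> by linarith
  qed
qed

lemma cexp_root_pow: "M \<ge> 1 \<Longrightarrow> exp (2 * pi * \<i> / of_nat M) ^ M = 1"
  by (simp add: exp_of_nat_mult[symmetric] exp_eq_1)

context perd begin

definition Dg :: "(complex \<Rightarrow> complex) \<Rightarrow> 'a \<Rightarrow> 'a" where
  "Dg g x = (\<Sum>j<m. smul (g (z ^ j)) (P j x))"

lemma Dg_add: "Dg g (x + y) = Dg g x + Dg g y"
  unfolding Dg_def by (simp add: P_add vs.scale_right_distrib sum.distrib)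
lemma Dg_smul: "Dg g (smul c x) = smul c (Dg g x)"
  unfolding Dg_def by (simp add: P_smul vs.scale_sum_right mult.commute)
lemma Dg_0: "Dg g 0 = 0"
  unfolding Dg_def by (simp add: P_0)
lemma Dg_sum: "Dg g (sum f A) = (\<Sum>a\<in>A. Dg g (f a))"
  using add_fun_sum[of "Dg g"] Dg_add Dg_0 by auto

lemma Dg_eig: assumes "D w = smul l w" shows "Dg g w = smul (g l) w"
proof (cases "w = 0")
  case True thus ?thesis by (simp add: Dg_0)
next
  case False
  define J where "J = {j \<in> {..<m}. l = z ^ j}"
  have PJ: "\<And>j. P j w = (if l = z ^ j then w else 0)" by (rule P_on_eig[OF assms False])
  have "w = (\<Sum>j<m. P j w)" by (simp add: decomp)
  also have "\<dots> = (\<Sum>j<m. if l = z ^ j then w else 0)" by (simp add: PJ)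
  also have "\<dots> = (\<Sum>j\<in>J. w)" unfolding J_def by (rule sum.inter_filter[symmetric]) simp
  also have "\<dots> = smul (of_nat (card J)) w" by (rule vs.sum_constant_scale)
  finally have "smul (of_nat (card J) - 1) w = 0"
    by (simp add: vs.scale_left_diff_distrib)
  hence cJ: "(of_nat (card J) :: complex) = 1" using False by simp
  have "Dg g w = (\<Sum>j<m. if l = z ^ j then smul (g l) w else 0)"
    unfolding Dg_def by (rule sum.cong) (auto simp: PJ)
  also have "\<dots> = (\<Sum>j\<in>J. smul (g l) w)" unfolding J_def by (rule sum.inter_filter[symmetric]) simp
  also have "\<dots> = smul (of_nat (card J)) (smul (g l) w)" by (rule vs.sum_constant_scale)
  finally show ?thesis using cJ by simp
qed

lemma Dg_pow_eig: assumes "D w = smul l w" shows "(Dg g ^^ n) w = smul (g l ^ n) w"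
  by (induction n) (auto simp: Dg_smul Dg_eig[OF assms] mult.commute)

lemma Dg_pair:
  assumes add: "\<And>l k. l ^ m = 1 \<Longrightarrow> k ^ m = 1 \<Longrightarrow> (l + k) ^ m = 1 \<Longrightarrow> g (l + k) = g l + g k"
    and u: "D u = smul l u" and v: "D v = smul k v" and lm: "l ^ m = 1" and km: "k ^ m = 1"
  shows "Dg g (br u v) = br (Dg g u) v + br u (Dg g v)"
proof -
  have e: "D (br u v) = smul (l + k) (br u v)"
    using D_br[of u v] u v by (simp add: br_smull br_smulr vs.scale_left_distrib)
  have rhs: "br (Dg g u) v + br u (Dg g v) = smul (g l + g k) (br u v)"
    using Dg_eig[OF u] Dg_eig[OF v] by (simp add: br_smull br_smulr vs.scale_left_distrib)
  show ?thesis
  proof (cases "br u v = 0")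
    case True thus ?thesis using rhs by (simp add: Dg_0)
  next
    case False
    have "(l + k) ^ m = 1" by (rule eig_root[OF e False])
    hence "g (l + k) = g l + g k" using add lm km by blast
    thus ?thesis using rhs Dg_eig[OF e] by simp
  qed
qed

lemma Dg_der:
  assumes add: "\<And>l k. l ^ m = 1 \<Longrightarrow> k ^ m = 1 \<Longrightarrow> (l + k) ^ m = 1 \<Longrightarrow> g (l + k) = g l + g k"
  shows "Dg g (br x y) = br (Dg g x) y + br x (Dg g y)"
proof -
  have zm: "\<And>j. (z ^ j) ^ m = 1"
    by (metis mult.commute power_mult power_one z_m)
  have "br x y = br (\<Sum>a<m. P a x) (\<Sum>b<m. P b y)" by (simp add: decomp)
  also have "\<dots> = (\<Sum>a<m. \<Sum>b<m. br (P a x) (P b y))" by (simp only: br_suml) (simp only: br_sumr)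
  finally have "Dg g (br x y) = (\<Sum>a<m. \<Sum>b<m. Dg g (br (P a x) (P b y)))"
    by (simp add: Dg_sum)
  also have "\<dots> = (\<Sum>a<m. \<Sum>b<m. br (Dg g (P a x)) (P b y) + br (P a x) (Dg g (P b y)))"
    by (intro sum.cong refl Dg_pair[OF add P_eig P_eig zm zm]) auto
  also have "\<dots> = br (\<Sum>a<m. Dg g (P a x)) (\<Sum>b<m. P b y) + br (\<Sum>a<m. P a x) (\<Sum>b<m. Dg g (P b y))"
  proof -
    have 1: "br (\<Sum>a<m. Dg g (P a x)) (\<Sum>b<m. P b y) = (\<Sum>a<m. \<Sum>b<m. br (Dg g (P a x)) (P b y))"
      by (simp only: br_suml) (simp only: br_sumr)
    have 2: "br (\<Sum>a<m. P a x) (\<Sum>b<m. Dg g (P b y)) = (\<Sum>a<m. \<Sum>b<m. br (P a x) (Dg g (P b y)))"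
      by (simp only: br_suml) (simp only: br_sumr)
    show ?thesis unfolding 1 2 by (simp only: sum.distrib)
  qed
  also have "\<dots> = br (Dg g x) y + br x (Dg g y)"
    by (simp add: decomp Dg_sum[symmetric])
  finally show ?thesis .
qed

lemma Dg_linear: "Vector_Spaces.linear smul smul (Dg g)"
proof -
  have "module_hom smul smul (Dg g)"
    by unfold_locales (auto simp: Dg_add Dg_smul)
  thus ?thesis by (simp add: module_hom_iff_linear)
qed

end

theorem main_dir:
  fixes smul :: "complex \<Rightarrow> 'a::ab_group_add \<Rightarrow> 'a"
    and br :: "'a \<Rightarrow> 'a \<Rightarrow> 'a"
  assumes lie: "lie_algebra smul br" and nz: "\<exists>x::'a. x \<noteq> 0"
    and der: "lie_derivation smul br D" and per: "periodic D"
  shows "\<exists>D. lie_derivation smul br D \<and> periodic_of_order D 6"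
proof -
  obtain m where m1: "m \<ge> 1" and Dm: "D ^^ m = id" using per unfolding periodic_def by auto
  interpret perd smul br D m using lie der m1 Dm by unfold_locales
  obtain x0 :: 'a where x0: "x0 \<noteq> 0" using nz by auto
  have "\<exists>j<m. P j x0 \<noteq> 0"
  proof (rule ccontr)
    assume "\<not> ?thesis"
    hence "(\<Sum>j<m. P j x0) = 0" by simp
    thus False using decomp[of x0] x0 by simp
  qed
  then obtain j0 where "j0 < m" and w0: "P j0 x0 \<noteq> 0" by auto
  define l0 where "l0 = z ^ j0"
  define e6 :: complex where "e6 = exp (2 * pi * \<i> / of_nat 6)"
  define c where "c = e6 / h6 l0"
  define g where "g l = c * h6 l" for l
  have l0nz: "l0 \<noteq> 0" using z_nz by (simp add: l0_def)
  have e66: "e6 ^ 6 = 1" unfolding e6_def by (rule cexp_root_pow) simp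
  have c6: "c ^ 6 = 1" unfolding c_def using e66 h6_pow[OF l0nz] by (simp add: power_divide)
  have gl0: "g l0 = e6" unfolding g_def c_def using h6_nz[OF l0nz] by simp
  have nrm: "\<And>l::complex. l ^ m = 1 \<Longrightarrow> norm l = 1"
  proof -
    fix l :: complex assume "l ^ m = 1"
    thus "norm l = 1" using power_eq_1_iff[of l m] m1 by auto
  qed
  have gadd: "\<And>l k. l ^ m = 1 \<Longrightarrow> k ^ m = 1 \<Longrightarrow> (l + k) ^ m = 1 \<Longrightarrow> g (l + k) = g l + g k"
    unfolding g_def using h6_add nrm by (simp add: distrib_left)
  let ?D = "Dg g"
  have derD: "lie_derivation smul br ?D"
    unfolding lie_derivation_def using Dg_linear Dg_der[OF gadd] by blast
  have pow_add: "\<And>n x y. (?D ^^ n) (x + y) = (?D ^^ n) x + (?D ^^ n) y"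
    by (rule funpow_add) (rule Dg_add)
  have pow_0: "\<And>n. (?D ^^ n) 0 = 0" by (rule funpow_zero) (rule Dg_0)
  have pow_sum: "\<And>n f A. (?D ^^ n) (sum f A) = (\<Sum>a\<in>A. (?D ^^ n) (f a))"
    using add_fun_sum pow_add pow_0 by metis
  have D6: "?D ^^ 6 = id"
  proof
    fix x
    have "(?D ^^ 6) x = (?D ^^ 6) (\<Sum>j<m. P j x)" by (simp add: decomp)
    also have "\<dots> = (\<Sum>j<m. smul (g (z ^ j) ^ 6) (P j x))"
      by (simp add: pow_sum Dg_pow_eig[OF P_eig])
    also have "\<dots> = (\<Sum>j<m. P j x)"
    proof (rule sum.cong[OF refl])
      fix j
      have "z ^ j \<noteq> 0" using z_nz by simp
      hence "g (z ^ j) ^ 6 = 1" unfolding g_def using c6 h6_pow by (simp add: power_mult_distrib)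
      thus "smul (g (z ^ j) ^ 6) (P j x) = P j x" by simp
    qed
    also have "\<dots> = x" by (rule decomp)
    finally show "(?D ^^ 6) x = id x" by simp
  qed
  have ord: "\<And>k. 1 \<le> k \<Longrightarrow> k < 6 \<Longrightarrow> ?D ^^ k \<noteq> id"
  proof
    fix k :: nat assume k: "1 \<le> k" "k < 6" and Dk: "?D ^^ k = id"
    have "(?D ^^ k) (P j0 x0) = smul (e6 ^ k) (P j0 x0)"
      using Dg_pow_eig[OF P_eig[of j0 x0], where g=g and n=k] gl0 by (simp add: l0_def)
    hence "smul (e6 ^ k - 1) (P j0 x0) = 0" using Dk by (simp add: vs.scale_left_diff_distrib)
    hence "e6 ^ k = 1" using w0 by simp
    thus False using cexp_root_ne1[of k 6] k unfolding e6_def by simp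
  qed
  show ?thesis
    using derD D6 ord unfolding periodic_of_order_def by (intro exI[of _ ?D]) auto
qed


theorem corollary3p11:
  fixes smul :: "complex \<Rightarrow> 'a::ab_group_add \<Rightarrow> 'a"
    and br :: "'a \<Rightarrow> 'a \<Rightarrow> 'a"
  assumes "lie_algebra smul br"
    and "finite_dim smul"
    and "\<exists>x::'a. x \<noteq> 0"
  shows "(\<exists>D. lie_derivation smul br D \<and> periodic D) \<longleftrightarrow>
         (\<exists>D. lie_derivation smul br D \<and> periodic_of_order D 6)"
proof
  assume "\<exists>D. lie_derivation smul br D \<and> periodic D"
  then obtain D where "lie_derivation smul br D" "periodic D" by auto
  thus "\<exists>D. lie_derivation smul br D \<and> periodic_of_order D 6"
    using main_dir assms(1,3) by blast
next
  assume "\<exists>D. lie_derivation smul br D \<and> periodic_of_order D 6"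
  thus "\<exists>D. lie_derivation smul br D \<and> periodic D"
    unfolding periodic_def periodic_of_order_def by blast
qed

end
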